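(* Let $R$ be a commutative ring and $I$ an ideal of $R$ with $I=I^2$. Then $I$ has avoidance.
   Context: All rings are commutative with $1\neq 0$. An ideal $I$ of a ring $R$ has avoidance if whenever $I_1,\ldots,I_n$ are finitely many ideals of $R$ with $I\subseteq\bigcup_{k=1}^n I_k$, then $I\subseteq I_k$ for some $k$. *)

theory Defs
  imports "HOL-Algebra.Ideal_Product"
begin

definition has_avoidance :: "('a, 'b) ring_scheme \<Rightarrow> 'a set \<Rightarrow> bool" where
  "has_avoidance R I \<longleftrightarrow>
     (\<forall>(n::nat) (J :: nat \<Rightarrow> 'a set).
        (\<forall>k<n. ideal (J k) R) \<and> I \<subseteq> (\<Union>k<n. J k) \<longrightarrow> (\<exists>k<n. I \<subseteq> J k))"

end

theory Submission
  imports Defs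
begin

lemma (in cring) colon_ideal:
  assumes X: "ideal X R" and c: "c \<in> carrier R"
  shows "ideal {a \<in> carrier R. a \<otimes> c \<in> X} R"
proof (rule idealI)
  show "ring R" by (rule ring_axioms)
  interpret X: ideal X R by fact
  show "subgroup {a \<in> carrier R. a \<otimes> c \<in> X} (add_monoid R)"
  proof (rule add.subgroupI)
    show "{a \<in> carrier R. a \<otimes> c \<in> X} \<subseteq> carrier R" by auto
    have "\<zero> \<in> {a \<in> carrier R. a \<otimes> c \<in> X}" using c X.zero_closed by simp
    then show "{a \<in> carrier R. a \<otimes> c \<in> X} \<noteq> {}" by blast
    fix a b assume a: "a \<in> {a \<in> carrier R. a \<otimes> c \<in> X}" and b: "b \<in> {a \<in> carrier R. a \<otimes> c \<in> X}"
    show "\<ominus> a \<in> {a \<in> carrier R. a \<otimes> c \<in> X}"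
      using a c by (simp add: l_minus X.a_inv_closed)
    show "a \<oplus> b \<in> {a \<in> carrier R. a \<otimes> c \<in> X}"
      using a b c by (simp add: l_distr X.a_closed)
  qed
  fix a x assume a: "a \<in> {a \<in> carrier R. a \<otimes> c \<in> X}" and x: "x \<in> carrier R"
  show "x \<otimes> a \<in> {a \<in> carrier R. a \<otimes> c \<in> X}"
    using a x c by (simp add: m_assoc X.I_l_closed)
  show "a \<otimes> x \<in> {a \<in> carrier R. a \<otimes> c \<in> X}"
  proof -
    have "a \<otimes> x \<otimes> c = (a \<otimes> c) \<otimes> x" using a x c by (simp add: m_assoc m_comm[of x c])
    then show ?thesis using a x c by (simp add: X.I_r_closed)
  qed
qed

lemma (in cring) genideal_bilinear:
  assumes X: "ideal X R" and U: "U \<subseteq> carrier R" and V: "V \<subseteq> carrier R"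
    and H: "\<And>u v. u \<in> U \<Longrightarrow> v \<in> V \<Longrightarrow> u \<otimes> v \<in> X"
    and a: "a \<in> Idl U" and b: "b \<in> Idl V"
  shows "a \<otimes> b \<in> X"
proof -
  have 1: "Idl U \<subseteq> {a \<in> carrier R. a \<otimes> v \<in> X}" if v: "v \<in> V" for v
  proof -
    have vC: "v \<in> carrier R" using v V by blast
    have "U \<subseteq> {a \<in> carrier R. a \<otimes> v \<in> X}" using v U H by blast
    then show ?thesis using genideal_minimal[OF colon_ideal[OF X vC]] by blast
  qed
  have aC: "a \<in> carrier R" using ideal.Icarr[OF genideal_ideal[OF U] a] .
  have "V \<subseteq> {b \<in> carrier R. b \<otimes> a \<in> X}"
  proof
    fix v assume v: "v \<in> V"
    then have vC: "v \<in> carrier R" using V by blast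
    have "a \<otimes> v \<in> X" using 1[OF v] a by blast
    then show "v \<in> {b \<in> carrier R. b \<otimes> a \<in> X}" using vC aC m_comm[OF vC aC] by simp
  qed
  then have "Idl V \<subseteq> {b \<in> carrier R. b \<otimes> a \<in> X}"
    using genideal_minimal[OF colon_ideal[OF X aC]] by blast
  then have "b \<otimes> a \<in> X" using b by blast
  moreover have "b \<in> carrier R" using ideal.Icarr[OF genideal_ideal[OF V] b] .
  ultimately show ?thesis using m_comm[OF aC] by metis
qed

lemma (in ring) ideal_add_mem_iff:
  assumes "ideal J R" "x \<in> carrier R" "y \<in> J"
  shows "x \<oplus> y \<in> J \<longleftrightarrow> x \<in> J"
proof
  interpret J: ideal J R by fact
  have yc: "y \<in> carrier R" using assms J.Icarr by blast
  assume "x \<oplus> y \<in> J"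
  then have "(x \<oplus> y) \<oplus> \<ominus> y \<in> J" using assms(3) by (simp add: J.a_closed J.a_inv_closed)
  moreover have "(x \<oplus> y) \<oplus> \<ominus> y = x" using assms(2) yc by (simp add: a_assoc r_neg)
  ultimately show "x \<in> J" by simp
next
  interpret J: ideal J R by fact
  assume "x \<in> J" then show "x \<oplus> y \<in> J" using assms(3) by (simp add: J.a_closed)
qed

lemma (in ring) alg_id: "x \<in> carrier R \<Longrightarrow> y \<in> carrier R \<Longrightarrow> a \<in> carrier R \<Longrightarrow> x \<otimes> y = x \<otimes> (y \<oplus> a) \<oplus> \<ominus> (x \<otimes> a)"
  by (simp add: r_distr a_assoc r_neg)

lemma (in cring) avoid_irred:
  fixes n :: nat and J :: "nat \<Rightarrow> 'a set"
  assumes I: "ideal I R" and Iidem: "I = I \<cdot> I"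
    and J: "\<forall>k<n. ideal (J k) R" and cov: "I \<subseteq> (\<Union>k<n. J k)"
    and irr: "\<forall>k<n. \<exists>a\<in>I. \<forall>j<n. j \<noteq> k \<longrightarrow> a \<notin> J j"
    and n: "0 < n"
  shows "I \<subseteq> J 0"
proof -
  interpret I: ideal I R by fact
  define T where "T z = {j. j < n \<and> z \<in> J j}" for z
  define U where "U s = {z \<in> I. s \<le> card (T z)}" for s
  define E where "E s = Idl (U s)" for s
  have Tfin: "finite (T z)" for z unfolding T_def by (rule finite_subset[of _ "{..<n}"]) auto
  have UC: "U s \<subseteq> carrier R" for s unfolding U_def using I.Icarr by blast
  have Eid: "ideal (E s) R" for s unfolding E_def using UC by (rule genideal_ideal)
  have UE: "U s \<subseteq> E s" for s unfolding E_def using UC by (rule genideal_self)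
  have aJ: "a \<in> J k" if "k < n" "a \<in> I" "\<forall>j<n. j \<noteq> k \<longrightarrow> a \<notin> J j" for a k
    using cov that by blast
  have Tmul: "T x \<union> T y \<subseteq> T (x \<otimes> y)" if "x \<in> I" "y \<in> I" for x y
  proof
    fix j assume "j \<in> T x \<union> T y"
    then have j: "j < n" "x \<in> J j \<or> y \<in> J j" unfolding T_def by auto
    have "x \<in> carrier R" "y \<in> carrier R" using that I.Icarr by auto
    have Jj: "ideal (J j) R" using J j(1) by simp
    have "x \<otimes> y \<in> J j"
      using j(2) ideal.I_r_closed[OF Jj _ \<open>y \<in> carrier R\<close>] ideal.I_l_closed[OF Jj _ \<open>x \<in> carrier R\<close>] by blast
    then show "j \<in> T (x \<otimes> y)" using j unfolding T_def by simp
  qed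
  have key: "x \<otimes> y \<in> E (Suc s)"
    if s: "s < n" and x: "x \<in> U s" and y: "y \<in> U s" for s x y
  proof -
    have xI: "x \<in> I" and yI: "y \<in> I" and cx: "s \<le> card (T x)" and cy: "s \<le> card (T y)"
      using x y unfolding U_def by auto
    have xc: "x \<in> carrier R" and yc: "y \<in> carrier R" using xI yI I.Icarr by auto
    have xyI: "x \<otimes> y \<in> I" using xI yc by (simp add: I.I_r_closed)
    show ?thesis
    proof (cases "Suc s \<le> card (T x \<union> T y)")
      case True
      have "card (T x \<union> T y) \<le> card (T (x \<otimes> y))"
        using Tmul[OF xI yI] Tfin by (rule card_mono[rotated])
      then have "x \<otimes> y \<in> U (Suc s)" using True xyI unfolding U_def by simp
      then show ?thesis using UE by blast
    next
      case False
      have cu: "card (T x \<union> T y) \<le> s" using False by simp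
      have fu: "finite (T x \<union> T y)" using Tfin by simp
      have "card (T x) \<le> card (T x \<union> T y)" "card (T y) \<le> card (T x \<union> T y)"
        using fu by (auto intro: card_mono)
      then have cxe: "card (T x) = card (T x \<union> T y)" and cye: "card (T y) = card (T x \<union> T y)"
        using cu cx cy by linarith+
      have eqx: "T x = T x \<union> T y" using card_subset_eq[OF fu Un_upper1 cxe] .
      have eqy: "T y = T x \<union> T y" using card_subset_eq[OF fu Un_upper2 cye] .
      have TyTx: "T y \<subseteq> T x" using eqx eqy by blast
      have cS: "card (T y) < n" using cye cu s by linarith
      have "\<exists>k<n. k \<notin> T y"
      proof (rule ccontr)
        assume "\<not> ?thesis"
        then have "{..<n} \<subseteq> T y" by auto
        then have "n \<le> card (T y)" using Tfin by (metis card_lessThan card_mono)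
        then show False using cS by simp
      qed
      then obtain k where k: "k < n" "k \<notin> T y" by blast
      obtain a where aI: "a \<in> I" and a: "\<forall>j<n. j \<noteq> k \<longrightarrow> a \<notin> J j" using irr k by blast
      have ac: "a \<in> carrier R" using aI I.Icarr by blast
      have aJk: "a \<in> J k" using aJ[OF k(1) aI a] .
      have yak: "y \<notin> J k" using k unfolding T_def by simp
      have yaI: "y \<oplus> a \<in> I" using yI aI by (simp add: I.a_closed)
      then obtain l where l: "l < n" "y \<oplus> a \<in> J l" using cov by blast
      have Jk: "ideal (J k) R" using J k by simp
      have lk: "l \<noteq> k"
        using l ideal_add_mem_iff[OF Jk yc aJk] yak by blast
      have lT: "l \<notin> T y"
      proof
        assume "l \<in> T y"
        then have "y \<in> J l" unfolding T_def by simp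
        have Jl: "ideal (J l) R" using J l by simp
        have "a \<oplus> y \<in> J l" using l ac yc by (simp add: a_comm)
        then have "a \<in> J l" using ideal_add_mem_iff[OF Jl ac \<open>y \<in> J l\<close>] by blast
        then show False using a l lk by blast
      qed
      have ss: "insert l (T y) \<subseteq> T (x \<otimes> (y \<oplus> a))"
      proof -
        have "T y \<subseteq> T (x \<otimes> (y \<oplus> a))" using Tmul[OF xI yaI] TyTx by blast
        moreover have Jl: "ideal (J l) R" using J l by simp
        moreover have "x \<otimes> (y \<oplus> a) \<in> J l" using ideal.I_l_closed[OF Jl l(2) xc] .
        then have "l \<in> T (x \<otimes> (y \<oplus> a))" using l(1) unfolding T_def by simp
        ultimately show ?thesis by blast
      qed
      have ss2: "insert k (T y) \<subseteq> T (x \<otimes> a)"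
      proof -
        have "T y \<subseteq> T (x \<otimes> a)" using Tmul[OF xI aI] TyTx by blast
        moreover have "x \<otimes> a \<in> J k" using ideal.I_l_closed[OF Jk aJk xc] .
        then have "k \<in> T (x \<otimes> a)" using k(1) unfolding T_def by simp
        ultimately show ?thesis by blast
      qed
      have "card (insert l (T y)) = Suc (card (T y))" using Tfin[of y] lT by (rule card_insert_disjoint)
      then have c1: "Suc s \<le> card (T (x \<otimes> (y \<oplus> a)))"
        using card_mono[OF Tfin ss] cy by linarith
      have "card (insert k (T y)) = Suc (card (T y))" using Tfin[of y] k(2) by (rule card_insert_disjoint)
      then have c2: "Suc s \<le> card (T (x \<otimes> a))"
        using card_mono[OF Tfin ss2] cy by linarith
      have "x \<otimes> (y \<oplus> a) \<in> I" using xI yc ac by (simp add: I.I_r_closed)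
      then have "x \<otimes> (y \<oplus> a) \<in> U (Suc s)" using c1 unfolding U_def by simp
      then have m1: "x \<otimes> (y \<oplus> a) \<in> E (Suc s)" using UE by blast
      have "x \<otimes> a \<in> I" using xI ac by (simp add: I.I_r_closed)
      then have "x \<otimes> a \<in> U (Suc s)" using c2 unfolding U_def by simp
      then have m2: "x \<otimes> a \<in> E (Suc s)" using UE by blast
      have eq: "x \<otimes> y = x \<otimes> (y \<oplus> a) \<oplus> \<ominus> (x \<otimes> a)" using xc yc ac by (rule alg_id)
      interpret Es: ideal "E (Suc s)" R by (rule Eid)
      show ?thesis unfolding eq using m1 m2 by (intro Es.a_closed Es.a_inv_closed)
    qed
  qed
  have EE: "a \<otimes> b \<in> E (Suc s)" if "s < n" "a \<in> E s" "b \<in> E s" for a b s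
  proof -
    have "\<And>u v. u \<in> U s \<Longrightarrow> v \<in> U s \<Longrightarrow> u \<otimes> v \<in> E (Suc s)" using key[OF that(1)] by blast
    then show ?thesis
      using genideal_bilinear[OF Eid[of "Suc s"] UC[of s] UC[of s] _ that(2)[unfolded E_def] that(3)[unfolded E_def]] by blast
  qed
  have IE: "s < n \<Longrightarrow> I \<subseteq> E s" for s
  proof (induction s)
    case 0
    have "U 0 = I" unfolding U_def by auto
    then show ?case using UE[of 0] by simp
  next
    case (Suc s)
    then have IH: "I \<subseteq> E s" and s: "s < n" by auto
    show ?case
    proof
      fix z assume "z \<in> I"
      have II: "I \<cdot> I = I" using Iidem by (rule sym)
      have "z \<in> I \<cdot> I" using \<open>z \<in> I\<close> by (simp only: II)
      then show "z \<in> E (Suc s)"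
      proof (induction z rule: ideal_prod.induct)
        case (prod i j) then show ?case using EE[OF s] IH by blast
      next
        case (sum s1 s2) then show ?case
          using Eid[of "Suc s"] by (simp add: additive_subgroup.a_closed ideal.axioms(1))
      qed
    qed
  qed
  have "U (n - 1) \<subseteq> J 0"
  proof
    fix z assume "z \<in> U (n - 1)"
    then have zI: "z \<in> I" and cz: "n - 1 \<le> card (T z)" unfolding U_def by auto
    have zc: "z \<in> carrier R" using zI I.Icarr by blast
    show "z \<in> J 0"
    proof (rule ccontr)
      assume nz: "z \<notin> J 0"
      have "T z \<subseteq> {1..<n}"
      proof
        fix j assume "j \<in> T z"
        then have "j < n" "z \<in> J j" unfolding T_def by auto
        have "j \<noteq> 0"
        proof
          assume "j = 0" then show False using \<open>z \<in> J j\<close> nz by simp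
        qed
        then show "j \<in> {1..<n}" using \<open>j < n\<close> by simp
      qed
      moreover have "card {1..<n} \<le> card (T z)" using cz by simp
      ultimately have Tz: "T z = {1..<n}"
        using card_subset_eq[of "{1..<n}" "T z"] card_mono[of "{1..<n}" "T z"] by fastforce
      obtain a where aI: "a \<in> I" and a: "\<forall>j<n. j \<noteq> 0 \<longrightarrow> a \<notin> J j" using irr n by blast
      have ac: "a \<in> carrier R" using aI I.Icarr by blast
      have aJ0: "a \<in> J 0" using aJ[OF n aI a] .
      have "z \<oplus> a \<in> I" using zI aI by (simp add: I.a_closed)
      then obtain l where l: "l < n" "z \<oplus> a \<in> J l" using cov by blast
      show False
      proof (cases "l = 0")
        case True
        have J0: "ideal (J 0) R" using J n by simp
        show False using l True ideal_add_mem_iff[OF J0 zc aJ0] nz by blast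
      next
        case False
        then have "l \<in> T z" using Tz l(1) by simp
        then have "z \<in> J l" unfolding T_def by simp
        have Jl: "ideal (J l) R" using J l by simp
        have "a \<oplus> z \<in> J l" using l ac zc by (simp add: a_comm)
        then have "a \<in> J l" using ideal_add_mem_iff[OF Jl ac \<open>z \<in> J l\<close>] by blast
        then show False using a l False by blast
      qed
    qed
  qed
  then have "E (n - 1) \<subseteq> J 0" unfolding E_def using J n UC by (intro genideal_minimal) auto
  moreover have "I \<subseteq> E (n - 1)" using IE n by simp
  ultimately show ?thesis by blast
qed

lemma avoid_main:
  fixes R :: "('a, 'b) ring_scheme" and I :: "'a set"
  assumes R: "cring R" and I: "ideal I R" and Iidem: "I = I \<cdot>\<^bsub>R\<^esub> I"
  shows "\<forall>J :: nat \<Rightarrow> 'a set. (\<forall>k<n. ideal (J k) R) \<and> I \<subseteq> (\<Union>k<n. J k) \<longrightarrow> (\<exists>k<n. I \<subseteq> J k)"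
proof (induction n)
  case 0
  have "\<zero>\<^bsub>R\<^esub> \<in> I" using I by (simp add: additive_subgroup.zero_closed ideal.axioms(1))
  then show ?case by auto
next
  case (Suc n)
  show ?case
  proof (intro allI impI)
    fix J :: "nat \<Rightarrow> 'a set"
    assume H: "(\<forall>k<Suc n. ideal (J k) R) \<and> I \<subseteq> (\<Union>k<Suc n. J k)"
    show "\<exists>k<Suc n. I \<subseteq> J k"
    proof (cases "\<forall>k<Suc n. \<exists>a\<in>I. \<forall>j<Suc n. j \<noteq> k \<longrightarrow> a \<notin> J j")
      case True
      have "I \<subseteq> J 0"
        using cring.avoid_irred[OF R I Iidem, of "Suc n" J] H True by simp
      then show ?thesis by blast
    next
      case False
      then obtain k where k: "k < Suc n" and kk: "\<forall>a\<in>I. \<exists>j<Suc n. j \<noteq> k \<and> a \<in> J j" by blast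
      define J' where "J' j = J (if j < k then j else Suc j)" for j
      have "(\<forall>j<n. ideal (J' j) R) \<and> I \<subseteq> (\<Union>j<n. J' j)"
      proof
        show "\<forall>j<n. ideal (J' j) R" using H k unfolding J'_def by auto
        show "I \<subseteq> (\<Union>j<n. J' j)"
        proof
          fix a assume "a \<in> I"
          then obtain j where j: "j < Suc n" "j \<noteq> k" "a \<in> J j" using kk by blast
          show "a \<in> (\<Union>j<n. J' j)"
          proof (cases "j < k")
            case True
            then have "J' j = J j" "j < n" using k unfolding J'_def by auto
            then show ?thesis using j by blast
          next
            case False
            then have "j - 1 < n" "J' (j - 1) = J j" using j k unfolding J'_def by auto
            then show ?thesis using j by blast
          qed
        qed
      qed
      then obtain k' where k': "k' < n" "I \<subseteq> J' k'" using Suc.IH by blast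
      show ?thesis
      proof (cases "k' < k")
        case True then show ?thesis using k' unfolding J'_def by (intro exI[of _ k']) auto
      next
        case False then show ?thesis using k' unfolding J'_def by (intro exI[of _ "Suc k'"]) auto
      qed
    qed
  qed
qed

theorem corollary2p2:
  fixes R :: "('a, 'b) ring_scheme" and I :: "'a set"
  assumes "cring R"
    and "\<one>\<^bsub>R\<^esub> \<noteq> \<zero>\<^bsub>R\<^esub>"
    and "ideal I R"
    and "I = I \<cdot>\<^bsub>R\<^esub> I"
  shows "has_avoidance R I"
  unfolding has_avoidance_def using avoid_main[OF assms(1) assms(3) assms(4)] by blast

end
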